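(* Let $r\geq 2$ be an integer and $m=rn$. Let $G=(A,B,E)$ be sampled from the Erdős–Rényi random bipartite graph distribution $\mathcal{G}(n,m,p)$ with $p\geq\frac{64\log m}{n}$. Then, with high probability, for all subsets $S\subseteq A$ and $T\subseteq B$ with $|T|=m-r|S|+1$, we have $|E_G(S,T)|>(16\log m)\cdot\min\{|S|,|T|\}$.
   Context: $\mathcal{G}(a,b,p)$ denotes the random bipartite graph with left vertex set $A$ of size $a$, right vertex set $B$ of size $b$, where each pair $(x,y)\in A\times B$ is an edge independently with probability $p$. $E_G(S,T)$ is the set of edges of $G$ between a vertex of $S$ and a vertex of $T$. $\log$ is natural. "With high probability" means with probability tending to 1 as $n\to\infty$. *)

theory Defs
  imports "HOL-Probability.Probability"
begin

text \<open>Random bipartite graph G(a,b,p): left vertices {0..<a}, right vertices {0..<b};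
  a graph is its edge set, a subset of {0..<a} \<times> {0..<b}; each pair is an edge
  independently with probability p.\<close>
definition random_bipartite :: "nat \<Rightarrow> nat \<Rightarrow> real \<Rightarrow> (nat \<times> nat) set pmf" where
  "random_bipartite a b p =
     map_pmf (\<lambda>f. {e \<in> {0..<a} \<times> {0..<b}. f e})
       (Pi_pmf ({0..<a} \<times> {0..<b}) False (\<lambda>_. bernoulli_pmf p))"

definition edges_between :: "(nat \<times> nat) set \<Rightarrow> nat set \<Rightarrow> nat set \<Rightarrow> (nat \<times> nat) set" where
  "edges_between E S T = E \<inter> (S \<times> T)"

end

theory Submission imports Defs begin

lemma ln2_le: "ln (2::real) \<le> 3/4"
proof -
  have "(2::real) \<le> 1 + 3/4 + (3/4)\<^sup>2/2" by (simp add: power2_eq_square)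
  also have "\<dots> \<le> exp (3/4)" by (rule exp_lower_Taylor_quadratic) simp
  finally have "ln (2::real) \<le> ln (exp (3/4))" by (subst ln_le_cancel_iff) auto
  then show ?thesis by simp
qed

lemma binom_tail:
  fixes p a :: real and N :: nat
  assumes p: "0 \<le> p" "p \<le> 1" and a: "0 \<le> a"
  shows "measure_pmf.prob (binomial_pmf N p) {k. real k \<le> a} \<le> exp (3/4*a - p*N/2)"
proof -
  let ?M = "binomial_pmf N p"
  have "measure_pmf.prob ?M {k. real k \<le> a} = measure_pmf.prob ?M ({k. real k \<le> a} \<inter> set_pmf ?M)"
    by (simp add: measure_Int_set_pmf)
  also have "\<dots> \<le> measure_pmf.prob ?M {k\<in>{..N}. real k \<le> a}"
    by (rule measure_pmf.finite_measure_mono) (use p in \<open>auto simp: set_pmf_binomial_eq split: if_splits\<close>)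
  also have "\<dots> = (\<Sum>k\<in>{k\<in>{..N}. real k \<le> a}. pmf ?M k)"
    by (simp add: measure_measure_pmf_finite)
  also have "\<dots> \<le> (\<Sum>k\<in>{k\<in>{..N}. real k \<le> a}. pmf ?M k * 2 powr (a - k))"
  proof (rule sum_mono)
    fix k assume "k \<in> {k\<in>{..N}. real k \<le> a}"
    then have "1 \<le> (2::real) powr (a - k)" by (intro ge_one_powr_ge_zero) auto
    then show "pmf ?M k \<le> pmf ?M k * 2 powr (a - k)"
      by (simp add: mult_le_cancel_left1)
  qed
  also have "\<dots> \<le> (\<Sum>k\<in>{..N}. pmf ?M k * 2 powr (a - k))"
    by (rule sum_mono2) auto
  also have "\<dots> = 2 powr a * (\<Sum>k\<le>N. of_nat (N choose k) * (p/2)^k * (1-p)^(N-k))"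
    unfolding sum_distrib_left
  proof (rule sum.cong[OF refl])
    fix k assume "k \<in> {..N}"
    have "(2::real) powr (a - k) = 2 powr a / 2^k"
      by (simp add: powr_diff powr_realpow)
    then show "pmf ?M k * 2 powr (a - k) = 2 powr a * (of_nat (N choose k) * (p/2)^k * (1-p)^(N-k))"
      using p by (simp add: power_divide)
  qed
  also have "\<dots> = 2 powr a * (p/2 + (1-p))^N"
    by (simp only: binomial_ring[of "p/2" "1-p" N])
  also have "\<dots> \<le> exp (3/4*a) * exp (-p/2)^N"
  proof (rule mult_mono)
    show "2 powr a \<le> exp (3/4*a)"
      unfolding powr_def using mult_left_mono[OF ln2_le a] by (simp add: mult.commute)
    have "p/2 + (1-p) \<le> exp (-p/2)" using exp_ge_add_one_self[of "-p/2"] by simp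
    then show "(p/2 + (1-p))^N \<le> exp (-p/2)^N"
      by (rule power_mono) (use p in simp)
  qed (use p in auto)
  also have "\<dots> = exp (3/4*a - p*N/2)"
  proof -
    have "exp (-p/2)^N = exp (real N * (-p/2))" by (simp only: exp_of_nat_mult)
    then have "exp (3/4*a) * exp (-p/2)^N = exp (3/4*a + real N * (-p/2))" by (simp only: exp_add)
    also have "3/4*a + real N * (-p/2) = 3/4*a - p*N/2" by simp
    finally show ?thesis .
  qed
  finally show ?thesis .
qed

lemma card_edges_binomial:
  assumes D: "D \<subseteq> {0..<a} \<times> {0..<b}" and p: "0 \<le> p" "p \<le> 1"
  shows "map_pmf (\<lambda>E. card (E \<inter> D)) (random_bipartite a b p) = binomial_pmf (card D) p"
proof -
  let ?\<Omega> = "{0..<a} \<times> {0..<b}"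
  let ?P = "Pi_pmf ?\<Omega> False (\<lambda>_. bernoulli_pmf p)"
  have fin: "finite D" using D finite_subset by blast
  have "binomial_pmf (card D) p = map_pmf (\<lambda>f. card {x\<in>D. f x}) (Pi_pmf D False (\<lambda>_. bernoulli_pmf p))"
    by (rule binomial_pmf_altdef') (use fin p in auto)
  also have "Pi_pmf D False (\<lambda>_. bernoulli_pmf p) = map_pmf (\<lambda>f x. if x \<in> D then f x else False) ?P"
    by (rule Pi_pmf_subset) (use D in auto)
  also have "map_pmf (\<lambda>f. card {x\<in>D. f x}) (map_pmf (\<lambda>f x. if x \<in> D then f x else False) ?P)
      = map_pmf (\<lambda>f. card {x\<in>D. f x}) ?P"
    unfolding map_pmf_comp by (intro map_pmf_cong refl arg_cong[where f=card]) auto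
  also have "\<dots> = map_pmf (\<lambda>E. card (E \<inter> D)) (random_bipartite a b p)"
    unfolding random_bipartite_def map_pmf_comp
  proof (rule map_pmf_cong[OF refl])
    fix f :: "nat \<times> nat \<Rightarrow> bool"
    have "{x\<in>D. f x} = {e \<in> ?\<Omega>. f e} \<inter> D" using D by auto
    then show "card {x\<in>D. f x} = card ({e \<in> ?\<Omega>. f e} \<inter> D)" by simp
  qed
  finally show ?thesis ..
qed

lemma prob_few_edges:
  assumes D: "D \<subseteq> {0..<a} \<times> {0..<b}" and p: "0 \<le> p" "p \<le> 1" and c: "0 \<le> c"
  shows "measure_pmf.prob (random_bipartite a b p) {E. real (card (E \<inter> D)) \<le> c}
           \<le> exp (3/4*c - p*card D/2)"
proof -
  have "measure_pmf.prob (random_bipartite a b p) {E. real (card (E \<inter> D)) \<le> c}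
      = measure_pmf.prob (map_pmf (\<lambda>E. card (E \<inter> D)) (random_bipartite a b p)) {k. real k \<le> c}"
    by (simp add: measure_map_pmf vimage_def)
  also have "\<dots> = measure_pmf.prob (binomial_pmf (card D) p) {k. real k \<le> c}"
    by (simp add: card_edges_binomial[OF D p])
  also have "\<dots> \<le> exp (3/4*c - p*card D/2)"
    by (rule binom_tail) (use p c in auto)
  finally show ?thesis .
qed

lemma pow_exp: "0 < m \<Longrightarrow> real (m ^ k) = exp (ln (real m) * real k)"
proof -
  assume "0 < m"
  have "exp (real k * ln (real m)) = exp (ln (real m)) ^ k" by (rule exp_of_nat_mult)
  then show ?thesis using \<open>0 < m\<close> by (simp add: mult.commute)
qed

lemma term_bound:
  fixes n r s t :: nat and L p :: real
  assumes r: "r \<ge> 2" and s: "1 \<le> s" "s \<le> n" and L: "L = ln (real (r * n))"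
    and p: "64 * L / n \<le> p" and t: "t = r * n - r * s + 1"
  shows "real (n choose s) * real ((r * n) choose t) * exp (3/4 * (16 * L * real (min s t)) - p * real (s * t) / 2)
          \<le> exp (-2 * L)"
proof -
  define m where "m = r * n"
  have n: "n \<ge> 1" using s by simp
  have m: "m \<ge> 2" unfolding m_def using r n by (metis mult_le_mono nat_mult_1_right)
  have "(1::real) \<le> real (r * n)" using m m_def by linarith
  then have L0: "L \<ge> 0" using L by (simp only: ln_ge_zero)
  have rs: "r * s \<le> m" "r * s \<ge> 2" unfolding m_def using s r by (simp, metis mult_le_mono nat_mult_1_right)
  have tm: "t \<le> m" using t rs unfolding m_def by linarith
  have mt: "m - t = r * s - 1" using t rs unfolding m_def by linarith
  have Lm: "L = ln (real m)" using L m_def by simp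
  have mk: "real (m ^ k) = exp (L * real k)" for k
    using pow_exp[of m k] m unfolding Lm by (simp only: mult.commute)
  obtain e :: nat where e1: "real (n choose s) * real (m choose t) \<le> exp (L * e)"
      and e2: "real e + 12 * real (min s t) + 2 \<le> 32 * real s * real t / real n"
  proof (cases "2 * s \<le> n")
    case True
    have "n choose s \<le> n ^ s" by (rule binomial_le_pow) (use s in simp)
    also have "\<dots> \<le> m ^ s" unfolding m_def using r by (intro power_mono) auto
    finally have b1: "n choose s \<le> m ^ s" .
    have "m choose t = m choose (m - t)" by (rule binomial_symmetric[OF tm])
    also have "\<dots> \<le> m ^ (m - t)" by (rule binomial_le_pow) simp
    also have "\<dots> \<le> m ^ (r * s)" using mt m by (intro power_increasing) auto
    finally have b2: "m choose t \<le> m ^ (r * s)" .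
    have "real (n choose s) * real (m choose t) \<le> real (m ^ s) * real (m ^ (r * s))"
      using b1 b2 by (intro mult_mono) auto
    also have "\<dots> = exp (L * real s + L * real (r * s))" unfolding mk exp_add ..
    also have "\<dots> = exp (L * real (s + r * s))" by (simp only: of_nat_add distrib_left)
    finally have E1: "real (n choose s) * real (m choose t) \<le> exp (L * real (s + r * s))" .
    have "2 * (r * s) \<le> r * n" using True by (metis mult.left_commute mult_le_mono2)
    then have t2: "r * n \<le> 2 * t" using t rs(1) unfolding m_def by linarith
    have "2 * n \<le> r * n" using r by (rule mult_le_mono1)
    then have ts: "s < t" using t2 True s by linarith
    have rsR: "real (r * s) \<ge> 2 * real s" using r by (simp add: mult_right_mono)
    have "16 * real (r * s) * real n \<le> 32 * real s * real t"
    proof -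
      have "real (r * n) \<le> 2 * real t" using t2 by linarith
      then have "real s * real (r * n) \<le> real s * (2 * real t)" by (intro mult_left_mono) auto
      then show ?thesis by (simp add: algebra_simps)
    qed
    then have "16 * real (r * s) \<le> 32 * real s * real t / real n"
      using n by (simp add: field_simps)
    moreover have "real (s + r * s) + 12 * real (min s t) + 2 \<le> 16 * real (r * s)"
    proof -
      have "real (min s t) = real s" using ts by simp
      moreover have "real s \<ge> 1" using s by simp
      ultimately show ?thesis using rsR unfolding of_nat_add by linarith
    qed
    ultimately show ?thesis by (intro that[OF E1]) linarith
  next
    case False
    have "n choose s = n choose (n - s)" by (rule binomial_symmetric[OF s(2)])
    also have "\<dots> \<le> n ^ (n - s)" by (rule binomial_le_pow) simp
    also have "\<dots> \<le> m ^ (n - s)" unfolding m_def using r by (intro power_mono) auto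
    finally have b1: "n choose s \<le> m ^ (n - s)" .
    have b2: "m choose t \<le> m ^ t" by (rule binomial_le_pow) (use tm in simp)
    have "real (n choose s) * real (m choose t) \<le> real (m ^ (n - s)) * real (m ^ t)"
      using b1 b2 by (intro mult_mono) auto
    also have "\<dots> = exp (L * real (n - s) + L * real t)" unfolding mk exp_add ..
    also have "\<dots> = exp (L * real (n - s + t))" by (simp only: of_nat_add distrib_left)
    finally have E1: "real (n choose s) * real (m choose t) \<le> exp (L * real (n - s + t))" .
    have "r * (n - s) \<ge> 2 * (n - s)" using r by simp
    moreover have "r * (n - s) = r * n - r * s" by (simp add: diff_mult_distrib2)
    ultimately have tt: "t \<ge> 2 * (n - s) + 1" using t by linarith
    have "16 * real t * real n \<le> 32 * real s * real t"
    proof -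
      have "real n \<le> 2 * real s" using False by linarith
      then have "real t * real n \<le> real t * (2 * real s)" by (intro mult_left_mono) auto
      then show ?thesis by (simp add: algebra_simps)
    qed
    then have "16 * real t \<le> 32 * real s * real t / real n"
      using n by (simp add: field_simps)
    moreover have "real (n - s + t) + 12 * real (min s t) + 2 \<le> 16 * real t"
    proof -
      have "real (min s t) \<le> real t" by simp
      moreover have "real (n - s + t) + 2 \<le> 4 * real t" using tt by linarith
      ultimately show ?thesis by linarith
    qed
    ultimately show ?thesis by (intro that[OF E1]) linarith
  qed
  have ps: "p * real (s * t) / 2 \<ge> L * (32 * real s * real t / real n)"
  proof -
    have "64 * L / n * real (s * t) \<le> p * real (s * t)" by (rule mult_right_mono[OF p]) simp
    then show ?thesis by (simp add: field_simps)
  qed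
  have "real (n choose s) * real ((r * n) choose t) * exp (3/4 * (16 * L * real (min s t)) - p * real (s * t) / 2)
      \<le> exp (L * e) * exp (3/4 * (16 * L * real (min s t)) - p * real (s * t) / 2)"
    using e1 m_def by (intro mult_right_mono) auto
  also have "\<dots> = exp (L * e + 3/4 * (16 * L * real (min s t)) - p * real (s * t) / 2)"
    by (simp add: exp_add[symmetric])
  also have "\<dots> \<le> exp (-2 * L)"
  proof (subst exp_le_cancel_iff)
    define Q where "Q = 32 * real s * real t / real n"
    have "L * (real e + 12 * real (min s t) + 2) \<le> L * Q"
      using e2 L0 unfolding Q_def by (rule mult_left_mono)
    then have h: "L * real e + 12 * (L * real (min s t)) + 2 * L \<le> L * Q"
      by (simp add: algebra_simps)
    have h2: "L * Q \<le> p * real (s * t) / 2" using ps unfolding Q_def .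
    have h3: "3/4 * (16 * L * real (min s t)) = 12 * (L * real (min s t))" by simp
    show "L * e + 3/4 * (16 * L * real (min s t)) - p * real (s * t) / 2 \<le> -2 * L"
      unfolding h3 using h h2 by linarith
  qed
  finally show ?thesis .
qed

lemma prob_UN_le:
  assumes "finite I"
  shows "measure_pmf.prob M (\<Union>i\<in>I. A i) \<le> (\<Sum>i\<in>I. measure_pmf.prob M (A i))"
  by (rule measure_pmf.finite_measure_subadditive_finite) (use assms in auto)

lemma main_bound:
  fixes r n :: nat and p L :: real
  assumes r: "r \<ge> 2" and n: "n \<ge> 1" and L: "L = ln (real (r * n))"
    and p: "64 * L / n \<le> p" "p \<le> 1"
  shows "measure_pmf.prob (random_bipartite n (r * n) p)
            {E. \<forall>S \<subseteq> {0..<n}. \<forall>T \<subseteq> {0..<r * n}.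
                  card T = r * n - r * card S + 1 \<longrightarrow>
                  real (card (edges_between E S T))
                    > 16 * ln (real (r * n)) * real (min (card S) (card T))}
         \<ge> 1 - real n * exp (-2 * L)"
proof -
  define m where "m = r * n"
  define M where "M = random_bipartite n m p"
  define tt where "tt s = m - r * s + 1" for s
  define SS where "SS s = {S. S \<subseteq> {0..<n} \<and> card S = s}" for s
  define TT where "TT s = {T. T \<subseteq> {0..<m} \<and> card T = tt s}" for s
  define B where "B (S::nat set) (T::nat set) = {E::(nat\<times>nat) set. real (card (E \<inter> (S \<times> T))) \<le> 16 * L * real (min (card S) (card T))}" for S T
  define Good where "Good = {E. \<forall>S \<subseteq> {0..<n}. \<forall>T \<subseteq> {0..<r * n}.
                  card T = r * n - r * card S + 1 \<longrightarrow>
                  real (card (edges_between E S T))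
                    > 16 * ln (real (r * n)) * real (min (card S) (card T))}"
  have L0: "L \<ge> 0"
  proof -
    have "1 \<le> r * n" using r n by (simp add: Suc_le_eq)
    then have "(1::real) \<le> real (r * n)" by linarith
    then show ?thesis using L by (simp only: ln_ge_zero)
  qed
  have "0 \<le> 64 * L / n" using L0 by simp
  then have p0: "0 \<le> p" using p(1) by linarith
  have sub: "UNIV - Good \<subseteq> (\<Union>s\<in>{1..n}. \<Union>S\<in>SS s. \<Union>T\<in>TT s. B S T)"
  proof
    fix E assume "E \<in> UNIV - Good"
    then obtain S T where ST: "S \<subseteq> {0..<n}" "T \<subseteq> {0..<r * n}" "card T = r * n - r * card S + 1"
      "\<not> real (card (edges_between E S T)) > 16 * ln (real (r * n)) * real (min (card S) (card T))"
      unfolding Good_def by blast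
    have cS: "card S \<le> n" using card_mono[OF finite_atLeastLessThan ST(1)] by simp
    have cT: "card T \<le> r * n" using card_mono[OF finite_atLeastLessThan ST(2)] by simp
    have "card S \<noteq> 0"
    proof
      assume "card S = 0"
      then show False using ST(3) cT by simp
    qed
    then have "card S \<in> {1..n}" using cS by auto
    moreover have "S \<in> SS (card S)" using ST unfolding SS_def by auto
    moreover have "T \<in> TT (card S)" using ST unfolding TT_def tt_def m_def by auto
    moreover have "E \<in> B S T" using ST(4) L unfolding B_def edges_between_def by auto
    ultimately show "E \<in> (\<Union>s\<in>{1..n}. \<Union>S\<in>SS s. \<Union>T\<in>TT s. B S T)" by blast
  qed
  have finSS: "finite (SS s)" for s unfolding SS_def by (rule finite_subset[of _ "Pow {0..<n}"]) auto
  have finTT: "finite (TT s)" for s unfolding TT_def by (rule finite_subset[of _ "Pow {0..<m}"]) auto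
  have "measure_pmf.prob M (UNIV - Good) \<le> measure_pmf.prob M (\<Union>s\<in>{1..n}. \<Union>S\<in>SS s. \<Union>T\<in>TT s. B S T)"
    by (rule measure_pmf.finite_measure_mono[OF sub]) simp
  also have "\<dots> \<le> (\<Sum>s\<in>{1..n}. measure_pmf.prob M (\<Union>S\<in>SS s. \<Union>T\<in>TT s. B S T))"
    by (rule prob_UN_le) simp
  also have "\<dots> \<le> (\<Sum>s\<in>{1..n}. exp (-2 * L))"
  proof (rule sum_mono)
    fix s assume s: "s \<in> {1..n}"
    have "measure_pmf.prob M (\<Union>S\<in>SS s. \<Union>T\<in>TT s. B S T)
        \<le> (\<Sum>S\<in>SS s. measure_pmf.prob M (\<Union>T\<in>TT s. B S T))"
      by (rule prob_UN_le[OF finSS])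
    also have "\<dots> \<le> (\<Sum>S\<in>SS s. \<Sum>T\<in>TT s. measure_pmf.prob M (B S T))"
      by (intro sum_mono prob_UN_le[OF finTT])
    also have "\<dots> \<le> (\<Sum>S\<in>SS s. \<Sum>T\<in>TT s.
                 exp (3/4 * (16 * L * real (min s (tt s))) - p * real (s * tt s) / 2))"
    proof (intro sum_mono)
      fix S T assume S: "S \<in> SS s" and T: "T \<in> TT s"
      have D: "S \<times> T \<subseteq> {0..<n} \<times> {0..<m}" using S T unfolding SS_def TT_def by auto
      have cST: "card (S \<times> T) = s * tt s" using S T unfolding SS_def TT_def by (simp add: card_cartesian_product)
      have "measure_pmf.prob M (B S T) \<le> exp (3/4 * (16 * L * real (min (card S) (card T))) - p * real (card (S \<times> T)) / 2)"
        unfolding M_def B_def by (rule prob_few_edges[OF D p0 p(2)]) (use L0 in simp)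
      also have "\<dots> = exp (3/4 * (16 * L * real (min s (tt s))) - p * real (s * tt s) / 2)"
        using S T cST unfolding SS_def TT_def by simp
      finally show "measure_pmf.prob M (B S T) \<le> exp (3/4 * (16 * L * real (min s (tt s))) - p * real (s * tt s) / 2)" .
    qed
    also have "\<dots> = real (n choose s) * real (m choose tt s) *
                 exp (3/4 * (16 * L * real (min s (tt s))) - p * real (s * tt s) / 2)"
    proof -
      have "card (SS s) = n choose s" unfolding SS_def using n_subsets[of "{0..<n}" s] by simp
      moreover have "card (TT s) = m choose tt s" unfolding TT_def using n_subsets[of "{0..<m}" "tt s"] by simp
      ultimately show ?thesis by simp
    qed
    also have "\<dots> \<le> exp (-2 * L)"
      unfolding m_def tt_def
      by (rule term_bound[OF r _ _ L p(1)]) (use s in auto)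
    finally show "measure_pmf.prob M (\<Union>S\<in>SS s. \<Union>T\<in>TT s. B S T) \<le> exp (-2 * L)" .
  qed
  also have "\<dots> = real n * exp (-2 * L)" by simp
  finally have bad: "measure_pmf.prob M (UNIV - Good) \<le> real n * exp (-2 * L)" .
  have "measure_pmf.prob M Good = 1 - measure_pmf.prob M (UNIV - Good)"
    using measure_pmf.prob_compl[of Good M] by simp
  then have G: "measure_pmf.prob M Good \<ge> 1 - real n * exp (-2 * L)" using bad by linarith
  show ?thesis using G unfolding M_def m_def Good_def .
qed

lemma exp_small:
  fixes r n :: nat and L :: real
  assumes r: "r \<ge> 2" and n: "n \<ge> 1" and L: "L = ln (real (r * n))"
  shows "real n * exp (-2 * L) \<le> 1 / real n"
proof -
  define x where "x = real (r * n)"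
  have "n \<le> r * n" using r by simp
  then have xn: "x \<ge> real n" unfolding x_def by (simp only: of_nat_le_iff)
  have n0: "real n \<ge> 1" using n by simp
  have x0: "x > 0" using xn n0 by linarith
  have "exp (-2 * L) * (x * x) = exp (-2 * L) * (exp L * exp L)"
    using x0 L unfolding x_def by simp
  also have "\<dots> = exp (-2 * L + L + L)" by (simp add: exp_add[symmetric] mult.assoc)
  also have "\<dots> = 1" by simp
  finally have e: "exp (-2 * L) = 1 / (x * x)" using x0 by (simp add: field_simps)
  have "real n * real n \<le> x * x" using xn n0 by (intro mult_mono) auto
  then have "real n * (1 / (x * x)) \<le> 1 / real n" using x0 n0 by (simp add: field_simps)
  then show ?thesis unfolding e .
qed

theorem lemma3:
  fixes r :: nat and p :: "nat \<Rightarrow> real"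
  assumes "r \<ge> 2"
    and "eventually (\<lambda>n. 64 * ln (real (r * n)) / real n \<le> p n \<and> p n \<le> 1) sequentially"
  shows "(\<lambda>n. measure_pmf.prob (random_bipartite n (r * n) (p n))
            {E. \<forall>S \<subseteq> {0..<n}. \<forall>T \<subseteq> {0..<r * n}.
                  card T = r * n - r * card S + 1 \<longrightarrow>
                  real (card (edges_between E S T))
                    > 16 * ln (real (r * n)) * real (min (card S) (card T))})
         \<longlonglongrightarrow> 1"
proof -
  define P where "P n = measure_pmf.prob (random_bipartite n (r * n) (p n))
            {E. \<forall>S \<subseteq> {0..<n}. \<forall>T \<subseteq> {0..<r * n}.
                  card T = r * n - r * card S + 1 \<longrightarrow>
                  real (card (edges_between E S T))
                    > 16 * ln (real (r * n)) * real (min (card S) (card T))}" for n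
  have ev1: "eventually (\<lambda>n. 1 - 1 / real n \<le> P n) sequentially"
    using assms(2) eventually_ge_at_top[of 1]
  proof eventually_elim
    case (elim n)
    have "1 - real n * exp (-2 * ln (real (r * n))) \<le> P n"
      unfolding P_def by (rule main_bound[OF assms(1) elim(2) refl]) (use elim(1) in auto)
    moreover have "real n * exp (-2 * ln (real (r * n))) \<le> 1 / real n"
      by (rule exp_small[OF assms(1) elim(2) refl])
    ultimately show ?case by linarith
  qed
  have ev2: "eventually (\<lambda>n. P n \<le> 1) sequentially"
    unfolding P_def by (intro always_eventually allI measure_pmf.prob_le_1)
  have lim: "(\<lambda>n. 1 - 1 / real n) \<longlonglongrightarrow> (1::real)"
    using tendsto_diff[OF tendsto_const[of "1::real"] lim_1_over_n] by simp
  have "P \<longlonglongrightarrow> 1"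
    by (rule tendsto_sandwich[OF ev1 ev2 lim tendsto_const])
  then show ?thesis unfolding P_def .
qed

end
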